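(* There is an absolute constant $C>0$ such that the following holds. Let $I \subseteq [0,1]$ be an open interval of length $|I|$. Let $\chi$ be a primitive Dirichlet character modulo a prime $q$ of order $d$. Then for any $K \geq 1$, $$\Big|\,|\{1\le n < q : \{\arg(\chi(n))\} \in I\}| - q|I|\,\Big| \le C q\left(\frac{1}{K} + \frac{\log(1+\lfloor K/d\rfloor)}{d}\right),$$ where $\{t\}$ denotes the fractional part of $t$.
   Context: For $z$ on the unit circle, $\arg(z)$ is the unique element of $(-1/2,1/2]$ with $z=e^{2\pi i \arg(z)}$. *)

theory Defs
  imports "HOL-Analysis.Analysis" "HOL-Number_Theory.Number_Theory"
begin

definition dirichlet_char :: "nat \<Rightarrow> (nat \<Rightarrow> complex) \<Rightarrow> bool" where
  "dirichlet_char q chi \<longleftrightarrow> q > 0 \<and>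
     (\<forall>n. chi (n + q) = chi n) \<and>
     (\<forall>m n. chi (m * n) = chi m * chi n) \<and>
     chi 1 = 1 \<and>
     (\<forall>n. chi n = 0 \<longleftrightarrow> \<not> coprime n q)"

text \<open>chi (mod q) is induced by a character modulo q' (q' divides q) iff chi is
  q'-periodic on residues coprime to q.\<close>
definition induced_mod :: "nat \<Rightarrow> nat \<Rightarrow> (nat \<Rightarrow> complex) \<Rightarrow> bool" where
  "induced_mod q q' chi \<longleftrightarrow>
     (\<forall>m n. coprime m q \<and> coprime n q \<and> [m = n] (mod q') \<longrightarrow> chi m = chi n)"

definition primitive_dirichlet_char :: "nat \<Rightarrow> (nat \<Rightarrow> complex) \<Rightarrow> bool" where
  "primitive_dirichlet_char q chi \<longleftrightarrow> dirichlet_char q chi \<and>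
     (\<forall>q'. q' dvd q \<and> q' < q \<longrightarrow> \<not> induced_mod q q' chi)"

definition dchar_order :: "nat \<Rightarrow> (nat \<Rightarrow> complex) \<Rightarrow> nat" where
  "dchar_order q chi = (LEAST d. d > 0 \<and> (\<forall>n. coprime n q \<longrightarrow> chi n ^ d = 1))"

text \<open>Normalised argument in (-1/2, 1/2]: z = exp(2 pi i carg z) on the unit circle.\<close>
definition carg :: "complex \<Rightarrow> real" where
  "carg z = Arg z / (2 * pi)"

end

theory Submission
  imports Defs
begin

lemma frac_carg_root:
  assumes "k < n"
  shows "frac (carg (cis (2 * pi * real k / real n))) = real k / real n"
proof -
  define t where "t = real k / real n"
  have t0: "0 \<le> t" and t1: "t < 1" using assms by (auto simp: t_def)
  have e: "cis (2 * pi * real k / real n) = exp (\<i> * of_real (2*pi*t))"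
    by (simp add: t_def cis_conv_exp mult.commute)
  have p0: "0 \<le> 2*pi*t" using t0 by simp
  have p1: "2*pi*t < 2*pi" using t1 by simp
  show ?thesis
  proof (cases "2*pi*t \<le> pi")
    case True
    have "Arg (cis (2 * pi * real k / real n)) = 2*pi*t"
      by (rule Arg_unique[of 1]) (use True p0 e pi_gt_zero in \<open>simp_all, linarith\<close>)
    then have "carg (cis (2 * pi * real k / real n)) = t" by (simp add: carg_def)
    then show ?thesis using t0 t1 by (simp add: frac_eq t_def)
  next
    case False
    have "exp (\<i> * of_real (2*pi*t)) = exp (\<i> * of_real (2*pi*t - 2*pi))"
      by (simp add: algebra_simps exp_diff)
    then have "Arg (cis (2 * pi * real k / real n)) = 2*pi*t - 2*pi"
      by (intro Arg_unique[of 1]) (use False p1 e pi_gt_zero in auto)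
    then have "carg (cis (2 * pi * real k / real n)) = t - 1" by (simp add: carg_def field_simps)
    moreover have "\<lfloor>t\<rfloor> = 0" using t0 t1 by (simp add: floor_eq_iff)
    ultimately show ?thesis by (simp add: frac_def t_def)
  qed
qed

lemma count_interval:
  fixes a b :: real and m :: nat
  assumes m: "m > 0" and a: "0 \<le> a" and ab: "a < b" and b: "b \<le> 1"
  shows "real m * (b - a) - 1 \<le> real (card {j. j < m \<and> a < real j / real m \<and> real j / real m < b})"
    and "real (card {j. j < m \<and> a < real j / real m \<and> real j / real m < b}) \<le> real m * (b - a) + 1"
proof -
  define lo where "lo = nat \<lfloor>a * m\<rfloor> + 1"
  define hi where "hi = nat \<lceil>b * m\<rceil>"
  have mp: "real m > 0" using m by simp
  have am: "a * m \<ge> 0" using a by simp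
  have eq: "{j. j < m \<and> a < real j / real m \<and> real j / real m < b} = {lo..<hi}"
  proof (rule Set.set_eqI, rule iffI)
    fix j assume "j \<in> {j. j < m \<and> a < real j / real m \<and> real j / real m < b}"
    then have j: "j < m" "a < real j / real m" "real j / real m < b" by auto
    have "a * m < real j" using j mp by (simp add: field_simps)
    then have "\<lfloor>a * m\<rfloor> < int j" by (simp add: floor_less_iff)
    then have "lo \<le> j" using am unfolding lo_def by linarith
    have "real j < b * m" using j mp by (simp add: field_simps)
    then have "int j < \<lceil>b * m\<rceil>" by (simp add: less_ceiling_iff)
    then have "j < hi" unfolding hi_def by linarith
    then show "j \<in> {lo..<hi}" using \<open>lo \<le> j\<close> by simp
  next
    fix j assume j: "j \<in> {lo..<hi}"
    then have "int j < \<lceil>b * m\<rceil>" unfolding hi_def by auto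
    then have jb: "real j < b * m" by (simp add: less_ceiling_iff)
    have "\<lfloor>a * m\<rfloor> < int j" using j am unfolding lo_def by auto
    then have ja: "a * m < real j" by (simp add: floor_less_iff)
    have 1: "a < real j / real m" using ja mp by (simp add: field_simps)
    have 2: "real j / real m < b" using jb mp by (simp add: field_simps)
    have "b * m \<le> m" using b mp by simp
    then have "j < m" using jb by linarith
    then show "j \<in> {j. j < m \<and> a < real j / real m \<and> real j / real m < b}" using 1 2 by simp
  qed
  have h1: "real hi < b * m + 1" "real hi \<ge> b * m" unfolding hi_def using a ab b
    by (auto simp: ceiling_correct) (smt (verit) ceiling_correct mult_nonneg_nonneg of_nat_0_le_iff)+
  have l1: "real lo > a * m" "real lo \<le> a * m + 1" unfolding lo_def using am
    by (auto simp: of_nat_nat) linarith+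
  show "real m * (b - a) - 1 \<le> real (card {j. j < m \<and> a < real j / real m \<and> real j / real m < b})"
    unfolding eq using h1 l1 by (simp add: of_nat_diff algebra_simps)
  show "real (card {j. j < m \<and> a < real j / real m \<and> real j / real m < b}) \<le> real m * (b - a) + 1"
    unfolding eq using h1 l1 ab mp
    by (cases "lo \<le> hi") (auto simp add: of_nat_diff algebra_simps intro: mult_right_mono order.trans[of _ "b * real m"])
qed

lemma main_bound:
  fixes q :: nat and chi :: "nat \<Rightarrow> complex" and a b :: real
  assumes q: "prime q" and chi: "dirichlet_char q chi"
    and a: "0 \<le> a" and ab: "a < b" and b: "b \<le> 1"
  shows "dchar_order q chi > 0 \<and>
    \<bar>real (card {n. 1 \<le> n \<and> n < q \<and> frac (carg (chi n)) \<in> {a<..<b}}) - real q * (b - a)\<bar>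
      \<le> 2 * real q / real (dchar_order q chi)"
proof -
  have q1: "q > 1" using q prime_gt_1_nat by blast
  have chiq: "\<And>n. chi (n + q) = chi n" and mult: "\<And>x y. chi (x * y) = chi x * chi y"
    and chi1: "chi 1 = 1" and chi0: "\<And>n. chi n = 0 \<longleftrightarrow> \<not> coprime n q"
    using chi unfolding dirichlet_char_def by auto
  have per: "chi (n + t * q) = chi n" for t n
  proof (induction t)
    case (Suc t)
    have "n + Suc t * q = (n + t * q) + q" by simp
    then show ?case using Suc chiq[of "n + t * q"] by (simp add: add_ac)
  qed simp
  have permod: "chi (n mod q) = chi n" for n
    using per[of "n mod q" "n div q"] by (metis div_mult_mod_eq add.commute)
  define S where "S = {1..<q}"
  have finS: "finite S" and cardS: "card S = q - 1" by (auto simp: S_def)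
  have Scop: "coprime n q" if "n \<in> S" for n
  proof -
    have "\<not> q dvd n" using that by (auto simp: S_def dest: dvd_imp_le)
    then show ?thesis using prime_imp_coprime[OF q] by (simp add: coprime_commute)
  qed
  have nz: "chi n \<noteq> 0" if "n \<in> S" for n using Scop[OF that] chi0 by simp
  have modS: "n mod q \<in> S" if "\<not> q dvd n" for n
    using that q1 by (auto simp: S_def dvd_eq_mod_eq_0)
  have mulS: "x * y mod q \<in> S" if "x \<in> S" "y \<in> S" for x y
  proof -
    have "\<not> q dvd x" "\<not> q dvd y" using that by (auto simp: S_def dest: dvd_imp_le)
    then have "\<not> q dvd x * y" using q by (simp add: prime_dvd_mult_iff)
    then show ?thesis by (rule modS)
  qed
  define G where "G = chi ` S"
  define m where "m = card G"
  have finG: "finite G" using finS by (simp add: G_def)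
  have oneS: "1 \<in> S" using q1 by (simp add: S_def)
  have oneG: "1 \<in> G" using oneS chi1 unfolding G_def by force
  have m0: "m > 0" using finG oneG unfolding m_def by (auto simp: card_gt_0_iff)
  have zG: "0 \<notin> G" using nz unfolding G_def by auto
  have closG: "z * w \<in> G" if zw: "z \<in> G" "w \<in> G" for z w
  proof -
    obtain x y where "x \<in> S" "y \<in> S" "z = chi x" "w = chi y" using zw unfolding G_def by auto
    then have "chi (x * y mod q) = z * w" "x * y mod q \<in> S" using permod mult mulS by auto
    then show ?thesis unfolding G_def by force
  qed
  have rootsG: "z ^ m = 1" if zG': "z \<in> G" for z
  proof -
    have z0: "z \<noteq> 0" using zG zG' by auto
    have inj: "inj_on ((*) z) G" using z0 by (auto simp: inj_on_def)
    have img: "(*) z ` G = G" using closG zG' inj finG by (intro endo_inj_surj) auto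
    have "prod id G = prod id ((*) z ` G)" using img by simp
    also have "\<dots> = prod ((*) z) G" using inj by (simp add: prod.reindex)
    also have "\<dots> = z ^ m * prod id G" by (simp add: prod.distrib m_def)
    finally have "prod id G * 1 = prod id G * z ^ m" by simp
    moreover have "prod id G \<noteq> 0" using finG zG by auto
    ultimately show ?thesis by (metis mult_left_cancel)
  qed
  have GR: "G = {z. z ^ m = 1}"
    using rootsG m0 by (intro card_subset_eq finite_roots_unity) (auto simp: card_roots_unity_eq m_def)
  define f where "f = (\<lambda>k. cis (2 * pi * real k / real m))"
  have bij: "bij_betw f {..<m} G" unfolding GR f_def by (rule Complex.bij_betw_roots_unity[OF m0])
  define d where "d = dchar_order q chi"
  have propm: "m > 0 \<and> (\<forall>n. coprime n q \<longrightarrow> chi n ^ m = 1)"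
  proof (intro conjI allI impI m0)
    fix n assume cn: "coprime n q"
    have "\<not> q dvd n"
    proof
      assume "q dvd n"
      then have "is_unit q" using coprime_common_divisor[OF cn _ dvd_refl] by blast
      then show False using q1 by simp
    qed
    then have "chi n \<in> G" using modS permod unfolding G_def by (metis image_eqI)
    then show "chi n ^ m = 1" by (rule rootsG)
  qed
  have dm: "d \<le> m" unfolding d_def dchar_order_def by (rule Least_le) (rule propm)
  have d0: "d > 0" unfolding d_def dchar_order_def by (rule conjunct1[OF LeastI[of _ m]]) (rule propm)
  define F where "F = (\<lambda>z. {n \<in> S. chi n = z})"
  define k where "k = card (F 1)"
  have finF: "finite (F z)" for z using finS by (simp add: F_def)
  have fib: "card (F z) = k" if zG': "z \<in> G" for z
  proof -
    obtain n0 where n0: "n0 \<in> S" "chi n0 = z" using zG' unfolding G_def by auto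
    define \<sigma> where "\<sigma> = (\<lambda>n. n0 * n mod q)"
    have inj: "inj_on \<sigma> S"
    proof (rule inj_onI)
      fix x y assume xy: "x \<in> S" "y \<in> S" "\<sigma> x = \<sigma> y"
      then have "[n0 * x = n0 * y] (mod q)" by (simp add: \<sigma>_def cong_def)
      then have "[x = y] (mod q)" using cong_mult_lcancel_nat[OF Scop[OF n0(1)]] by simp
      then show "x = y" using xy by (intro cong_less_modulus_unique_nat) (auto simp: S_def)
    qed
    have sub: "\<sigma> ` S \<subseteq> S" using mulS n0 by (auto simp: \<sigma>_def)
    have imS: "\<sigma> ` S = S" using endo_inj_surj[OF finS sub inj] .
    have "F z = \<sigma> ` F 1"
    proof
      show "\<sigma> ` F 1 \<subseteq> F z"
      proof
        fix y assume "y \<in> \<sigma> ` F 1"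
        then obtain x where x: "x \<in> S" "chi x = 1" "y = \<sigma> x" by (auto simp: F_def)
        then have "y \<in> S" using sub by auto
        moreover have "chi y = z" using x n0 permod mult by (simp add: \<sigma>_def)
        ultimately show "y \<in> F z" by (simp add: F_def)
      qed
    next
      show "F z \<subseteq> \<sigma> ` F 1"
      proof
        fix y assume y: "y \<in> F z"
        then have "y \<in> \<sigma> ` S" using imS by (simp add: F_def)
        then obtain x where x: "x \<in> S" "y = \<sigma> x" by auto
        have "z * chi x = z" using y x n0 permod mult by (simp add: \<sigma>_def F_def)
        then have "chi x = 1" using nz[OF n0(1)] n0(2) by simp
        then show "y \<in> \<sigma> ` F 1" using x by (auto simp: F_def)
      qed
    qed
    then have "card (F z) = card (F 1)"
      using inj by (simp add: card_image inj_on_subset[of \<sigma> S] F_def)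
    then show ?thesis by (simp add: k_def)
  qed
  have count: "card {n \<in> S. chi n \<in> A} = card A * k" if AG: "A \<subseteq> G" for A
  proof -
    have finA: "finite A" using AG finG finite_subset by blast
    have "{n \<in> S. chi n \<in> A} = (\<Union>z\<in>A. F z)" by (auto simp: F_def)
    then have "card {n \<in> S. chi n \<in> A} = (\<Sum>z\<in>A. card (F z))"
      using finA finF by (simp add: card_UN_disjoint F_def disjoint_iff)
    also have "\<dots> = (\<Sum>z\<in>A. k)" using fib AG by (intro sum.cong) auto
    finally show ?thesis by simp
  qed
  have qmk: "q - 1 = m * k"
  proof -
    have "{n \<in> S. chi n \<in> G} = S" by (auto simp: G_def)
    then show ?thesis using count[of G] cardS by (simp add: m_def)
  qed
  have k1: "k \<ge> 1"
  proof -
    have "1 \<in> F 1" using oneS chi1 by (simp add: F_def)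
    then show ?thesis using finF[of 1] unfolding k_def by (metis One_nat_def card_gt_0_iff empty_iff Suc_leI)
  qed
  define J where "J = {j. j < m \<and> a < real j / real m \<and> real j / real m < b}"
  define A where "A = {z \<in> G. frac (carg z) \<in> {a<..<b}}"
  have AJ: "A = f ` J"
  proof -
    have G': "G = f ` {..<m}" using bij by (simp add: bij_betw_def)
    have fr: "frac (carg (f j)) = real j / real m" if "j < m" for j
      unfolding f_def using frac_carg_root[OF that] .
    show ?thesis
    proof
      show "A \<subseteq> f ` J"
      proof
        fix z assume "z \<in> A"
        then obtain j where j: "j < m" "z = f j" "frac (carg z) \<in> {a<..<b}"
          unfolding A_def G' by blast
        then have "j \<in> J" using fr[OF j(1)] by (simp add: J_def)
        then show "z \<in> f ` J" using j by blast
      qed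
      show "f ` J \<subseteq> A"
      proof
        fix z assume "z \<in> f ` J"
        then obtain j where j: "j \<in> J" "z = f j" by blast
        then have jm: "j < m" by (simp add: J_def)
        then have "frac (carg z) \<in> {a<..<b}" using j fr[OF jm] by (simp add: J_def)
        moreover have "z \<in> G" using jm j G' by blast
        ultimately show "z \<in> A" by (simp add: A_def)
      qed
    qed
  qed
  have injJ: "inj_on f J"
    by (rule inj_on_subset[OF bij_betw_imp_inj_on[OF bij]]) (auto simp: J_def)
  have cardA: "card A = card J"
    unfolding AJ using injJ by (rule card_image)
  have T: "{n. 1 \<le> n \<and> n < q \<and> frac (carg (chi n)) \<in> {a<..<b}} = {n \<in> S. chi n \<in> A}"
    unfolding S_def A_def G_def by (rule Set.set_eqI) (auto intro: imageI)
  have cT: "card {n. 1 \<le> n \<and> n < q \<and> frac (carg (chi n)) \<in> {a<..<b}} = card J * k"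
    unfolding T using count[of A] cardA by (simp add: A_def)
  have cJ1: "real m * (b - a) - 1 \<le> real (card J)" and cJ2: "real (card J) \<le> real m * (b - a) + 1"
    using count_interval[OF m0 a ab b] unfolding J_def by auto
  have rq: "real q = real m * real k + 1" using qmk q1
    by (metis One_nat_def Suc_diff_1 add.commute less_trans of_nat_Suc of_nat_mult zero_less_one)
  define c where "c = real (card J)"
  define r where "r = b - a"
  have r0: "0 < r" "r \<le> 1" using ab a b by (auto simp: r_def)
  have e: "real (card J * k) - real q * (b - a) = (c - real m * r) * real k - r"
    by (simp add: rq c_def r_def algebra_simps)
  have "\<bar>(c - real m * r) * real k\<bar> \<le> 1 * real k"
  proof -
    have "\<bar>c - real m * r\<bar> \<le> 1" using cJ1 cJ2 by (simp add: c_def r_def abs_le_iff)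
    from mult_right_mono[OF this, of "real k"] show ?thesis unfolding abs_mult by simp
  qed
  then have bnd: "\<bar>real (card J * k) - real q * (b - a)\<bar> \<le> real k + 1"
    unfolding e using r0 by linarith
  have "real d * real k \<le> real m * real k" using dm by (simp add: mult_right_mono)
  moreover have "real m * 1 \<le> real m * real k" using k1 by (intro mult_left_mono) auto
  moreover have "real d * (real k + 1) = real d * real k + real d" by (simp add: algebra_simps)
  moreover have "real d \<le> real m" using dm by simp
  ultimately have "real d * (real k + 1) \<le> 2 * real q" using rq by linarith
  then have "real k + 1 \<le> 2 * real q / real d" using d0 by (simp add: field_simps)
  then show ?thesis using bnd cT d0 unfolding d_def by simp
qed

lemma key_ineq:
  fixes K :: real and d :: nat
  assumes K: "K \<ge> 1" and d: "d > 0"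
  shows "1 / (2 * real d) \<le> 1 / K + ln (1 + real_of_int \<lfloor>K / real d\<rfloor>) / real d"
proof (cases "K < real d")
  case True
  have fl: "\<lfloor>K / real d\<rfloor> \<ge> 0" using K d by simp
  have "ln (1 + real_of_int \<lfloor>K / real d\<rfloor>) \<ge> 0" using fl by simp
  then have "0 \<le> ln (1 + real_of_int \<lfloor>K / real d\<rfloor>) / real d" by simp
  moreover have "1 / (2 * real d) \<le> 1 / K" using True K by (simp add: field_simps)
  ultimately show ?thesis by linarith
next
  case False
  then have "K / real d \<ge> 1" using d by (simp add: field_simps)
  then have "\<lfloor>K / real d\<rfloor> \<ge> 1" by (simp add: le_floor_iff)
  then have "(2::real) \<le> 1 + real_of_int \<lfloor>K / real d\<rfloor>" by linarith
  then have "ln 2 \<le> ln (1 + real_of_int \<lfloor>K / real d\<rfloor>)" using ln_le_cancel_iff[of 2 "1 + real_of_int \<lfloor>K / real d\<rfloor>"] by linarith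
  then have "1/2 \<le> ln (1 + real_of_int \<lfloor>K / real d\<rfloor>)" using ln2_ge_two_thirds by linarith
  then have "1 / (2 * real d) \<le> ln (1 + real_of_int \<lfloor>K / real d\<rfloor>) / real d"
    using d by (simp add: field_simps)
  moreover have "0 \<le> 1 / K" using K by simp
  ultimately show ?thesis by linarith
qed

theorem lemma2p4:
  shows "\<exists>C>0. \<forall>(q::nat) (chi::nat \<Rightarrow> complex) (d::nat) (a::real) (b::real) (K::real).
     prime q \<and> primitive_dirichlet_char q chi \<and> d = dchar_order q chi \<and>
     0 \<le> a \<and> a < b \<and> b \<le> 1 \<and> K \<ge> 1 \<longrightarrow>
     \<bar>real (card {n. 1 \<le> n \<and> n < q \<and> frac (carg (chi n)) \<in> {a<..<b}}) - real q * (b - a)\<bar>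
       \<le> C * real q * (1 / K + ln (1 + real_of_int \<lfloor>K / real d\<rfloor>) / real d)"
proof (intro exI[of _ 4] conjI allI impI)
  fix q :: nat and chi :: "nat \<Rightarrow> complex" and d :: nat and a b K :: real
  assume h: "prime q \<and> primitive_dirichlet_char q chi \<and> d = dchar_order q chi \<and>
     0 \<le> a \<and> a < b \<and> b \<le> 1 \<and> K \<ge> 1"
  then have chi: "dirichlet_char q chi" by (simp add: primitive_dirichlet_char_def)
  from main_bound[OF _ chi, of a b] h
  have d0: "d > 0" and bnd: "\<bar>real (card {n. 1 \<le> n \<and> n < q \<and> frac (carg (chi n)) \<in> {a<..<b}}) - real q * (b - a)\<bar>
      \<le> 2 * real q / real d" by auto
  have ki: "1 / (2 * real d) \<le> 1 / K + ln (1 + real_of_int \<lfloor>K / real d\<rfloor>) / real d"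
    using key_ineq[OF _ d0, of K] h by simp
  have "2 * real q / real d = 4 * real q * (1 / (2 * real d))" using d0 by simp
  also have "\<dots> \<le> 4 * real q * (1 / K + ln (1 + real_of_int \<lfloor>K / real d\<rfloor>) / real d)"
    using ki by (intro mult_left_mono) auto
  finally show "\<bar>real (card {n. 1 \<le> n \<and> n < q \<and> frac (carg (chi n)) \<in> {a<..<b}}) - real q * (b - a)\<bar>
       \<le> 4 * real q * (1 / K + ln (1 + real_of_int \<lfloor>K / real d\<rfloor>) / real d)" using bnd by linarith
qed simp

end
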